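(* Let $L$ spin-orbitals be indexed by $\{1,\dots,L\}$, let $1\le N_{\mathrm{occ}}<L$, and let $\Psi_0$ be the Fermi vacuum, i.e. the Slater determinant in which spin-orbitals $1,\dots,N_{\mathrm{occ}}$ are occupied and the others empty. Let $\hat C$ be a chain (product in a fixed order) of $n$ excitation operators $\hat E^a_i=\hat a^\dagger_a\hat a_i$ and $n$ deexcitation operators $\hat D^i_a=\hat a^\dagger_i\hat a_a$ ($i\le N_{\mathrm{occ}}<a$), and let $S$ be the word obtained by replacing, from left to right, each deexcitation operator by "(" and each excitation operator by ")". Let $N\ge1$, $K\in\{0,\dots,2n\}$, and let $\hat C^N_K$ be the chain obtained by inserting, immediately after the $K$-th (de)excitation operator of $\hat C$, the product $\hat a^\dagger_{r_1}\cdots\hat a^\dagger_{r_N}\hat a_{s_1}\cdots\hat a_{s_N}$ with arbitrary $r_1,\dots,r_N,s_1,\dots,s_N\in\{1,\dots,L\}$. If $S$ is not a Dyck word, then $\langle\Psi_0|\hat C^N_K|\Psi_0\rangle=0$.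
   Context: A Dyck word is a finite word over $\{(,)\}$ with as many opening as closing brackets, every prefix of which contains at least as many opening as closing brackets. *)

theory Defs
  imports Complex_Main
begin

(* Fermionic Fock space over spin-orbitals (natural numbers, in use {1..L}).
   Occupation-number basis vectors |T> are indexed by finite sets T of occupied
   orbitals; a ket is its coefficient function  nat set => real.
   Sign convention (Jordan-Wigner order):
     a^dag_p |S> = (-1)^#{q in S. q < p} |S u {p}>   (p not in S), else 0
     a_p     |S> = (-1)^#{q in S. q < p} |S - {p}>   (p in S),     else 0  *)

type_synonym ket = "nat set \<Rightarrow> real"

definition fsign :: "nat \<Rightarrow> nat set \<Rightarrow> real" where
  "fsign p T = (-1) ^ card {q \<in> T. q < p}"

definition cre :: "nat \<Rightarrow> ket \<Rightarrow> ket" where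
  "cre p v = (\<lambda>T. if p \<in> T then fsign p (T - {p}) * v (T - {p}) else 0)"

definition ann :: "nat \<Rightarrow> ket \<Rightarrow> ket" where
  "ann p v = (\<lambda>T. if p \<notin> T then fsign p T * v (insert p T) else 0)"

datatype ladder = Cre nat | Ann nat

fun ladder_op :: "ladder \<Rightarrow> ket \<Rightarrow> ket" where
  "ladder_op (Cre p) = cre p"
| "ladder_op (Ann p) = ann p"

definition prod_op :: "ladder list \<Rightarrow> ket \<Rightarrow> ket" where
  "prod_op os v = foldr ladder_op os v"

definition basis :: "nat set \<Rightarrow> ket" where
  "basis S = (\<lambda>T. if T = S then 1 else 0)"

definition fermi_vac :: "nat \<Rightarrow> nat set" where
  "fermi_vac Nocc = {1..Nocc}"

definition vac_expect :: "nat \<Rightarrow> ladder list \<Rightarrow> real" where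
  "vac_expect Nocc os = prod_op os (basis (fermi_vac Nocc)) (fermi_vac Nocc)"

(* (de)excitation operators: Exc i a = E^a_i = a^dag_a a_i,  Dex i a = D^i_a = a^dag_i a_a *)
datatype exop = Exc nat nat | Dex nat nat

fun exop_ladders :: "exop \<Rightarrow> ladder list" where
  "exop_ladders (Exc i a) = [Cre a, Ann i]"
| "exop_ladders (Dex i a) = [Cre i, Ann a]"

fun exop_valid :: "nat \<Rightarrow> nat \<Rightarrow> exop \<Rightarrow> bool" where
  "exop_valid L Nocc (Exc i a) = (1 \<le> i \<and> i \<le> Nocc \<and> Nocc < a \<and> a \<le> L)"
| "exop_valid L Nocc (Dex i a) = (1 \<le> i \<and> i \<le> Nocc \<and> Nocc < a \<and> a \<le> L)"

fun is_exc :: "exop \<Rightarrow> bool" where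
  "is_exc (Exc i a) = True"
| "is_exc (Dex i a) = False"

(* brackets: True = "(" , False = ")" *)
fun bracket_of :: "exop \<Rightarrow> bool" where
  "bracket_of (Dex i a) = True"
| "bracket_of (Exc i a) = False"

definition n_open :: "bool list \<Rightarrow> nat" where
  "n_open w = length (filter (\<lambda>b. b) w)"

definition n_close :: "bool list \<Rightarrow> nat" where
  "n_close w = length (filter (\<lambda>b. \<not> b) w)"

definition dyck_word :: "bool list \<Rightarrow> bool" where
  "dyck_word w \<longleftrightarrow> n_open w = n_close w \<and>
     (\<forall>k \<le> length w. n_close (take k w) \<le> n_open (take k w))"

definition inserted_chain :: "exop list \<Rightarrow> nat \<Rightarrow> nat list \<Rightarrow> nat list \<Rightarrow> ladder list" where
  "inserted_chain C K rs ss =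
     concat (map exop_ladders (take K C)) @ map Cre rs @ map Ann ss @
     concat (map exop_ladders (drop K C))"

end

theory Submission
  imports Defs
begin

definition virt :: "nat \<Rightarrow> nat set \<Rightarrow> nat set" where
  "virt Nocc T = {x \<in> T. Nocc < x}"

definition supp_lvl :: "nat \<Rightarrow> ket \<Rightarrow> int \<Rightarrow> bool" where
  "supp_lvl Nocc v l \<longleftrightarrow> (\<forall>T. v T \<noteq> 0 \<longrightarrow> finite T \<and> int (card (virt Nocc T)) = l)"

definition cE :: "exop list \<Rightarrow> int" where
  "cE P = int (length (filter is_exc P))"
definition cD :: "exop list \<Rightarrow> int" where
  "cD P = int (length (filter (\<lambda>e. \<not> is_exc e) P))"

lemma prod_op_append: "prod_op (xs @ ys) v = prod_op xs (prod_op ys v)"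
  by (simp add: prod_op_def)

lemma prod_op_zero: "prod_op xs (\<lambda>_. 0) = (\<lambda>_. 0)"
proof (induction xs)
  case Nil then show ?case by (simp add: prod_op_def)
next
  case (Cons x xs)
  then show ?case
    by (cases x) (auto simp: prod_op_def cre_def ann_def)
qed

lemma virt_insert_big: "Nocc < a \<Longrightarrow> virt Nocc (insert a T) = insert a (virt Nocc T)"
  by (auto simp: virt_def)
lemma virt_insert_small: "a \<le> Nocc \<Longrightarrow> virt Nocc (insert a T) = virt Nocc T"
  by (auto simp: virt_def)
lemma virt_diff_small: "a \<le> Nocc \<Longrightarrow> virt Nocc (T - {a}) = virt Nocc T"
  by (auto simp: virt_def)
lemma virt_fin: "finite T \<Longrightarrow> finite (virt Nocc T)"
  by (simp add: virt_def)

lemma cre_big: assumes "Nocc < a" "supp_lvl Nocc v l" shows "supp_lvl Nocc (cre a v) (l+1)"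
  unfolding supp_lvl_def
proof (intro allI impI)
  fix T assume "cre a v T \<noteq> 0"
  then have aT: "a \<in> T" and nz: "v (T - {a}) \<noteq> 0" by (auto simp: cre_def split: if_splits)
  from assms(2) nz have f: "finite (T - {a})" and c: "int (card (virt Nocc (T - {a}))) = l"
    unfolding supp_lvl_def by auto
  have Te: "T = insert a (T - {a})" using aT by auto
  have "virt Nocc T = insert a (virt Nocc (T - {a}))"
    by (subst Te, rule virt_insert_big[OF assms(1)])
  moreover have "a \<notin> virt Nocc (T - {a})" by (simp add: virt_def)
  ultimately have "card (virt Nocc T) = Suc (card (virt Nocc (T - {a})))"
    using virt_fin[OF f] by simp
  then show "finite T \<and> int (card (virt Nocc T)) = l + 1" using f c by simp
qed

lemma cre_small: assumes "a \<le> Nocc" "supp_lvl Nocc v l" shows "supp_lvl Nocc (cre a v) l"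
  unfolding supp_lvl_def
proof (intro allI impI)
  fix T assume "cre a v T \<noteq> 0"
  then have aT: "a \<in> T" and nz: "v (T - {a}) \<noteq> 0" by (auto simp: cre_def split: if_splits)
  from assms(2) nz have f: "finite (T - {a})" and c: "int (card (virt Nocc (T - {a}))) = l"
    unfolding supp_lvl_def by auto
  then show "finite T \<and> int (card (virt Nocc T)) = l"
    using virt_diff_small[OF assms(1)] by simp
qed

lemma ann_big: assumes "Nocc < a" "supp_lvl Nocc v l" shows "supp_lvl Nocc (ann a v) (l-1)"
  unfolding supp_lvl_def
proof (intro allI impI)
  fix T assume "ann a v T \<noteq> 0"
  then have aT: "a \<notin> T" and nz: "v (insert a T) \<noteq> 0" by (auto simp: ann_def split: if_splits)
  from assms(2) nz have f: "finite (insert a T)" and c: "int (card (virt Nocc (insert a T))) = l"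
    unfolding supp_lvl_def by auto
  have "a \<notin> virt Nocc T" using aT by (simp add: virt_def)
  then have "card (virt Nocc (insert a T)) = Suc (card (virt Nocc T))"
    using virt_fin[of T] f virt_insert_big[OF assms(1)] by simp
  then show "finite T \<and> int (card (virt Nocc T)) = l - 1" using f c by simp
qed

lemma ann_small: assumes "a \<le> Nocc" "supp_lvl Nocc v l" shows "supp_lvl Nocc (ann a v) l"
  unfolding supp_lvl_def
proof (intro allI impI)
  fix T assume "ann a v T \<noteq> 0"
  then have aT: "a \<notin> T" and nz: "v (insert a T) \<noteq> 0" by (auto simp: ann_def split: if_splits)
  from assms(2) nz have f: "finite (insert a T)" and c: "int (card (virt Nocc (insert a T))) = l"
    unfolding supp_lvl_def by auto
  then show "finite T \<and> int (card (virt Nocc T)) = l"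
    using virt_insert_small[OF assms(1)] by simp
qed

lemma ket_lvl:
  assumes "\<forall>e \<in> set U. exop_valid L Nocc e" "supp_lvl Nocc v l"
  shows "supp_lvl Nocc (prod_op (concat (map exop_ladders U)) v) (l + cE U - cD U)"
  using assms
proof (induction U)
  case Nil then show ?case by (simp add: prod_op_def cE_def cD_def)
next
  case (Cons e U)
  then have IH: "supp_lvl Nocc (prod_op (concat (map exop_ladders U)) v) (l + cE U - cD U)" by simp
  from Cons.prems have ve: "exop_valid L Nocc e" by simp
  show ?case
  proof (cases e)
    case (Exc i a)
    with ve have "i \<le> Nocc" "Nocc < a" by auto
    from cre_big[OF this(2) ann_small[OF this(1) IH]] show ?thesis
      using Exc by (simp add: prod_op_def cE_def cD_def algebra_simps)
  next
    case (Dex i a)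
    with ve have "i \<le> Nocc" "Nocc < a" by auto
    from cre_small[OF this(1) ann_big[OF this(2) IH]] show ?thesis
      using Dex by (simp add: prod_op_def cE_def cD_def algebra_simps)
  qed
qed

lemma supp_neg: "supp_lvl Nocc v l \<Longrightarrow> l < 0 \<Longrightarrow> v = (\<lambda>_. 0)"
  unfolding supp_lvl_def by force

lemma bra_zero:
  assumes "\<forall>e \<in> set P. exop_valid L Nocc e"
  shows "\<And>S. finite S \<Longrightarrow> cE P - cD P > int (card (virt Nocc S)) \<Longrightarrow>
     prod_op (concat (map exop_ladders P)) w S = 0"
  using assms
proof (induction P)
  case Nil then show ?case by (simp add: cE_def cD_def)
next
  case (Cons e P S)
  from Cons.prems have ve: "exop_valid L Nocc e" and vP: "\<forall>e \<in> set P. exop_valid L Nocc e" by auto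
  define w' where "w' = prod_op (concat (map exop_ladders P)) w"
  have eq: "prod_op (concat (map exop_ladders (e # P))) w = prod_op (exop_ladders e) w'"
    by (simp add: w'_def prod_op_append)
  show ?case
  proof (cases e)
    case (Exc i a)
    with ve have i: "i \<le> Nocc" and a: "Nocc < a" by auto
    show ?thesis
    proof (cases "a \<in> S \<and> i \<notin> S - {a}")
      case True
      let ?S' = "insert i (S - {a})"
      have f': "finite ?S'" using Cons.prems(1) by simp
      have v1: "virt Nocc ?S' = virt Nocc (S - {a})" by (rule virt_insert_small[OF i])
      have Se: "S = insert a (S - {a})" using True by auto
      have "virt Nocc S = insert a (virt Nocc (S - {a}))"
        by (subst Se, rule virt_insert_big[OF a])
      moreover have "a \<notin> virt Nocc (S - {a})" by (simp add: virt_def)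
      ultimately have "card (virt Nocc S) = Suc (card (virt Nocc ?S'))"
        using virt_fin[of "S - {a}" Nocc] Cons.prems(1) v1 by simp
      then have "cE P - cD P > int (card (virt Nocc ?S'))"
        using Cons.prems(2) Exc by (simp add: cE_def cD_def)
      then have "w' ?S' = 0" using Cons.IH[OF f' _ vP] by (simp add: w'_def)
      then show ?thesis using eq Exc True
        by (simp add: prod_op_def cre_def ann_def)
    next
      case False
      then show ?thesis using eq Exc by (auto simp: prod_op_def cre_def ann_def)
    qed
  next
    case (Dex i a)
    with ve have i: "i \<le> Nocc" and a: "Nocc < a" by auto
    show ?thesis
    proof (cases "i \<in> S \<and> a \<notin> S - {i}")
      case True
      let ?S' = "insert a (S - {i})"
      have f': "finite ?S'" using Cons.prems(1) by simp
      have v1: "virt Nocc ?S' = insert a (virt Nocc (S - {i}))" by (rule virt_insert_big[OF a])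
      have "a \<notin> virt Nocc (S - {i})" using True by (simp add: virt_def)
      then have "card (virt Nocc ?S') = Suc (card (virt Nocc S))"
        using virt_fin[of "S - {i}" Nocc] Cons.prems(1) v1 virt_diff_small[OF i] by simp
      then have "cE P - cD P > int (card (virt Nocc ?S'))"
        using Cons.prems(2) Dex by (simp add: cE_def cD_def)
      then have "w' ?S' = 0" using Cons.IH[OF f' _ vP] by (simp add: w'_def)
      then show ?thesis using eq Dex True
        by (simp add: prod_op_def cre_def ann_def)
    next
      case False
      then show ?thesis using eq Dex by (auto simp: prod_op_def cre_def ann_def)
    qed
  qed
qed

lemma nclose_map: "n_close (map bracket_of xs) = length (filter is_exc xs)"
proof (induction xs)
  case (Cons x xs) then show ?case by (cases x) (auto simp: n_close_def)
qed (simp add: n_close_def)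

lemma nopen_map: "n_open (map bracket_of xs) = length (filter (\<lambda>e. \<not> is_exc e) xs)"
proof (induction xs)
  case (Cons x xs) then show ?case by (cases x) (auto simp: n_open_def)
qed (simp add: n_open_def)

lemma vac_lvl: "supp_lvl Nocc (basis (fermi_vac Nocc)) 0"
  by (simp add: supp_lvl_def basis_def fermi_vac_def virt_def)

theorem lemma1:
  fixes L Nocc n N K :: nat and C :: "exop list" and rs ss :: "nat list"
  assumes "1 \<le> Nocc" and "Nocc < L"
    and "\<forall>e \<in> set C. exop_valid L Nocc e"
    and "length (filter is_exc C) = n" and "length (filter (\<lambda>e. \<not> is_exc e) C) = n"
    and "1 \<le> N" and "K \<le> 2 * n"
    and "length rs = N" and "length ss = N"
    and "\<forall>r \<in> set rs. 1 \<le> r \<and> r \<le> L" and "\<forall>s \<in> set ss. 1 \<le> s \<and> s \<le> L"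
    and "\<not> dyck_word (map bracket_of C)"
  shows "vac_expect Nocc (inserted_chain C K rs ss) = 0"
proof -
  have eqc: "n_open (map bracket_of C) = n_close (map bracket_of C)"
    using assms(4,5) nclose_map nopen_map by metis
  then obtain k where k: "k \<le> length C"
    and viol: "n_open (take k (map bracket_of C)) < n_close (take k (map bracket_of C))"
    using assms(12) unfolding dyck_word_def by force
  have viol': "cE (take k C) > cD (take k C)"
    using viol by (simp add: take_map nclose_map nopen_map cE_def cD_def)
  let ?S0 = "fermi_vac Nocc"
  have fS: "finite ?S0" by (simp add: fermi_vac_def)
  have v0: "card (virt Nocc ?S0) = 0" by (simp add: fermi_vac_def virt_def)
  show ?thesis
  proof (cases "k \<le> K")
    case True
    have "take K C = take k C @ drop k (take K C)"
      using True by (metis append_take_drop_id min.absorb1 take_take)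
    then have "inserted_chain C K rs ss = concat (map exop_ladders (take k C)) @
       (concat (map exop_ladders (drop k (take K C))) @ map Cre rs @ map Ann ss @
     concat (map exop_ladders (drop K C)))"
      unfolding inserted_chain_def by (metis append.assoc concat_append map_append)
    moreover have vt: "\<forall>e \<in> set (take k C). exop_valid L Nocc e"
      using assms(3) by (meson in_set_takeD)
    ultimately show ?thesis
      unfolding vac_expect_def
      using bra_zero[OF vt fS] viol' v0 by (simp add: prod_op_append)
  next
    case False
    have "drop K C = take (k - K) (drop K C) @ drop k C"
      using False by (metis append_take_drop_id drop_drop le_add_diff_inverse2 nat_le_linear)
    then have ic: "inserted_chain C K rs ss = (concat (map exop_ladders (take K C)) @ map Cre rs @ map Ann ss @
     concat (map exop_ladders (take (k - K) (drop K C)))) @ concat (map exop_ladders (drop k C))"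
      unfolding inserted_chain_def by (metis append.assoc concat_append map_append)
    have vd: "\<forall>e \<in> set (drop k C). exop_valid L Nocc e"
      using assms(3) by (meson in_set_dropD)
    have tot: "cE C = cE (take k C) + cE (drop k C)" "cD C = cD (take k C) + cD (drop k C)"
      by (metis cE_def cD_def append_take_drop_id filter_append length_append of_nat_add)+
    have "cE C = cD C" using assms(4,5) by (simp add: cE_def cD_def)
    then have neg: "0 + cE (drop k C) - cD (drop k C) < 0" using tot viol' by linarith
    have "prod_op (concat (map exop_ladders (drop k C))) (basis ?S0) = (\<lambda>_. 0)"
      using supp_neg[OF ket_lvl[OF vd vac_lvl] neg] .
    then show ?thesis unfolding vac_expect_def ic prod_op_append by (simp add: prod_op_zero)
  qed
qed

end
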